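(* Let $f,g:[0,+\infty)\to[0,+\infty)$ be increasing functions with $\lim_{x\to+\infty}f(x)=\lim_{x\to+\infty}g(x)=+\infty$. Then there exist $\delta>0$ and a continuous increasing concave function $v:[0,+\infty)\to[0,+\infty)$ with $\lim_{x\to+\infty}v(x)=+\infty$ such that $\frac{v(f(x))}{v(g(x))}\ge\delta$ for every sufficiently large $x$. *)

theory Defs
  imports "HOL-Analysis.Analysis"
begin

end

theory Submission
  imports Defs
begin

locale bseq =
  fixes b :: "nat \<Rightarrow> real"
  assumes b0: "b 0 = 1" and bS: "\<And>k. b (Suc k) \<ge> 2 * b k"
begin

definition V :: "real \<Rightarrow> real" where "V t = (\<Sum>k. min (t / b k) 1)"

lemma b_pow: "b k \<ge> 2 ^ k"
proof (induction k)
  case 0 then show ?case by (simp add: b0)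
next
  case (Suc k) then show ?case using bS[of k] by simp
qed

lemma b_pos: "b k > 0"
  using b_pow[of k] by (smt (verit) zero_less_power)

lemma b_shift: "b (k + n) \<ge> 2 ^ k * b n"
proof (induction k)
  case 0 then show ?case by simp
next
  case (Suc k) then show ?case using bS[of "k+n"] by simp
qed

lemma b_mono: "k \<le> m \<Longrightarrow> b k \<le> b m"
proof -
  assume "k \<le> m"
  then obtain j where "m = j + k" by (metis add.commute le_add_diff_inverse)
  moreover have "b (j + k) \<ge> 2 ^ j * b k" by (rule b_shift)
  moreover have "2 ^ j * b k \<ge> b k" using b_pos[of k]
    by (simp add: mult_le_cancel_right1 less_imp_le)
  ultimately show ?thesis by simp
qed

lemma term_abs: "\<bar>min (t / b k) 1\<bar> \<le> \<bar>t\<bar> * (1/2) ^ k"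
proof -
  have bp: "b k > 0" by (rule b_pos)
  have "\<bar>min (t / b k) 1\<bar> \<le> \<bar>t\<bar> / b k"
    using bp by (cases "t \<ge> 0") (auto simp: abs_if divide_le_eq min_def)
  also have "\<dots> \<le> \<bar>t\<bar> / 2 ^ k"
    using b_pow[of k] bp by (intro divide_left_mono) auto
  also have "\<dots> = \<bar>t\<bar> * (1/2) ^ k" by (simp add: power_divide)
  finally show ?thesis .
qed

lemma summ: "summable (\<lambda>k. min (t / b k) 1)"
proof (rule summable_comparison_test)
  show "\<exists>N. \<forall>n\<ge>N. norm (min (t / b n) 1) \<le> \<bar>t\<bar> * (1/2) ^ n"
    using term_abs by auto
  show "summable (\<lambda>n. \<bar>t\<bar> * (1/2::real) ^ n)"
    by (intro summable_mult summable_geometric) auto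
qed

lemma V_concave: "concave_on UNIV V"
  unfolding concave_on_iff
proof (intro conjI ballI allI impI)
  fix x y :: real and u w :: real
  assume u: "u \<ge> 0" and w: "w \<ge> 0" and uw: "u + w = 1"
  have t: "u * min (x / b k) 1 + w * min (y / b k) 1 \<le> min ((u *\<^sub>R x + w *\<^sub>R y) / b k) 1" for k
  proof -
    have bp: "b k > 0" by (rule b_pos)
    have a1: "u * min (x / b k) 1 \<le> u * (x / b k)" "u * min (x / b k) 1 \<le> u * 1"
      using u by (metis min.cobounded1 mult_left_mono times_divide_eq_right, metis min.cobounded2 mult_left_mono mult.right_neutral)
    have a2: "w * min (y / b k) 1 \<le> w * (y / b k)" "w * min (y / b k) 1 \<le> w * 1"
      using w by (metis min.cobounded1 mult_left_mono times_divide_eq_right, metis min.cobounded2 mult_left_mono mult.right_neutral)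
    have "(u *\<^sub>R x + w *\<^sub>R y) / b k = u * (x / b k) + w * (y / b k)"
      by (simp add: add_divide_distrib)
    then show ?thesis using a1 a2 uw by (simp add: min_def)
  qed
  have "u * V x + w * V y = (\<Sum>k. u * min (x / b k) 1 + w * min (y / b k) 1)"
    unfolding V_def
    using suminf_add[OF summable_mult[OF summ[of x], of u] summable_mult[OF summ[of y], of w]]
      suminf_mult[OF summ[of x], of u] suminf_mult[OF summ[of y], of w] by simp
  also have "\<dots> \<le> V (u *\<^sub>R x + w *\<^sub>R y)"
    unfolding V_def
    by (rule suminf_le[OF t summable_add[OF summable_mult[OF summ[of x]] summable_mult[OF summ[of y]]] summ])
  finally show "u * V x + w * V y \<le> V (u *\<^sub>R x + w *\<^sub>R y)" .
qed simp

lemma V_cont: "continuous_on UNIV V"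
proof -
  have "convex_on UNIV (\<lambda>x. - V x)" using V_concave by (simp add: concave_on_def)
  then have "continuous_on UNIV (\<lambda>x. - V x)" by (intro convex_on_continuous) auto
  then have "continuous_on UNIV (\<lambda>x. - (- V x))" by (rule continuous_on_minus)
  then show ?thesis by simp
qed

lemma V_mono: "0 \<le> s \<Longrightarrow> s \<le> t \<Longrightarrow> V s \<le> V t"
  unfolding V_def
proof (rule suminf_le[OF _ summ summ])
  fix k assume "s \<le> t"
  then show "min (s / b k) 1 \<le> min (t / b k) 1"
    using b_pos[of k] by (auto simp: min_def divide_right_mono)
qed

lemma V_nonneg: "0 \<le> t \<Longrightarrow> 0 \<le> V t"
  unfolding V_def using b_pos by (intro suminf_nonneg summ) (auto simp: less_imp_le)

lemma V_lower: assumes "b m \<le> t" shows "V t \<ge> real m + 1"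
proof -
  have t0: "t \<ge> 0" using assms b_pos[of m] by linarith
  have "V t = (\<Sum>k. min (t / b (k + Suc m)) 1) + (\<Sum>k<Suc m. min (t / b k) 1)"
    unfolding V_def by (rule suminf_split_initial_segment[OF summ])
  moreover have "(\<Sum>k. min (t / b (k + Suc m)) 1) \<ge> 0"
    using b_pos t0 summ[of t] by (intro suminf_nonneg summable_ignore_initial_segment) (auto simp: less_imp_le)
  moreover have "(\<Sum>k<Suc m. min (t / b k) 1) = (\<Sum>k<Suc m. 1)"
  proof (rule sum.cong)
    fix k assume "k \<in> {..<Suc m}"
    then have "b k \<le> t" using b_mono[of k m] assms by auto
    then show "min (t / b k) 1 = 1" using b_pos[of k] by (simp add: min_def le_divide_eq)
  qed simp
  ultimately show ?thesis by simp
qed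

lemma V_upper: assumes "0 \<le> t" "t \<le> b n" shows "V t \<le> real n + 2"
proof -
  have "V t = (\<Sum>k. min (t / b (k + n)) 1) + (\<Sum>k<n. min (t / b k) 1)"
    unfolding V_def by (rule suminf_split_initial_segment[OF summ])
  moreover have "(\<Sum>k<n. min (t / b k) 1) \<le> (\<Sum>k<n. 1)"
    by (intro sum_mono) auto
  moreover have "(\<Sum>k. min (t / b (k + n)) 1) \<le> (\<Sum>k. (1/2::real) ^ k)"
  proof (rule suminf_le)
    fix k
    have bp: "b (k+n) > 0" "b n > 0" using b_pos by auto
    have "min (t / b (k + n)) 1 \<le> t / b (k+n)" by simp
    also have "\<dots> \<le> b n / (2 ^ k * b n)"
      using assms b_shift[of k n] bp by (intro frac_le) auto
    also have "\<dots> = (1/2) ^ k" using bp by (simp add: power_divide)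
    finally show "min (t / b (k + n)) 1 \<le> (1/2) ^ k" .
  next
    show "summable (\<lambda>k. min (t / b (k + n)) 1)"
      using summ[of t] by (rule summable_ignore_initial_segment)
  qed (rule summable_geometric, simp)
  moreover have "(\<Sum>k. (1/2::real) ^ k) = 2" by (simp add: suminf_geometric)
  ultimately show ?thesis by simp
qed

lemma b_unbounded: "\<exists>m. t < b m"
proof -
  obtain m :: nat where "t < m" using reals_Archimedean2 by blast
  moreover have "real m < 2 ^ m"
  proof (induction m)
    case (Suc m)
    have "(1::real) \<le> 2 ^ m" by simp
    moreover have "real (Suc m) = real m + 1" "(2::real)^Suc m = 2*2^m" by simp_all
    ultimately show ?case using Suc by linarith
  qed simp
  ultimately have "t < b m" using b_pow[of m] by linarith
  then show ?thesis by blast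
qed

lemma bracket: assumes "b 0 \<le> t" shows "\<exists>m. b m \<le> t \<and> t < b (Suc m)"
proof -
  obtain n where n: "t < b n" using b_unbounded by blast
  define N where "N = (LEAST n. t < b n)"
  have N: "t < b N" unfolding N_def using n by (rule LeastI)
  have "N \<noteq> 0" using N assms by (cases N) auto
  then obtain m where m: "N = Suc m" by (cases N) auto
  have "\<not> t < b m" unfolding N_def
  proof
    assume "t < b m"
    then have "N \<le> m" unfolding N_def by (rule Least_le)
    then show False using m by simp
  qed
  then show ?thesis using N m by (metis not_less)
qed

end

theorem lemma3p2:
  fixes f g :: "real \<Rightarrow> real"
  assumes f_mono: "mono_on {0..} f" and f_nonneg: "\<forall>x\<ge>0. f x \<ge> 0"
    and g_mono: "mono_on {0..} g" and g_nonneg: "\<forall>x\<ge>0. g x \<ge> 0"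
    and f_lim: "filterlim f at_top at_top"
    and g_lim: "filterlim g at_top at_top"
  shows "\<exists>\<delta>>0. \<exists>v :: real \<Rightarrow> real.
           continuous_on {0..} v \<and> mono_on {0..} v \<and> concave_on {0..} v \<and>
           (\<forall>x\<ge>0. v x \<ge> 0) \<and> filterlim v at_top at_top \<and>
           (\<forall>\<^sub>F x in at_top. v (f x) / v (g x) \<ge> \<delta>)"
proof -
  have "\<forall>a. \<exists>Y. \<forall>x\<ge>0. f x \<le> a \<longrightarrow> g x \<le> Y"
  proof
    fix a :: real
    have "\<forall>\<^sub>F x in at_top. f x > a" using f_lim by (simp add: filterlim_at_top_dense)
    then obtain X where X: "\<And>x. x \<ge> X \<Longrightarrow> f x > a" by (auto simp: eventually_at_top_linorder)
    show "\<exists>Y. \<forall>x\<ge>0. f x \<le> a \<longrightarrow> g x \<le> Y"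
    proof (intro exI allI impI)
      fix x :: real assume x: "x \<ge> 0" "f x \<le> a"
      then have "x \<le> max X 0" using X[of x] by linarith
      then show "g x \<le> g (max X 0)" using g_mono x by (auto intro: mono_onD)
    qed
  qed
  then obtain \<psi> where psi: "\<And>a x. x \<ge> 0 \<Longrightarrow> f x \<le> a \<Longrightarrow> g x \<le> \<psi> a" by metis
  define b where "b = rec_nat (1::real) (\<lambda>k bk. max (2 * bk) (\<psi> bk))"
  have b0': "b 0 = 1" and bS': "\<And>k. b (Suc k) = max (2 * b k) (\<psi> (b k))" by (simp_all add: b_def)
  interpret bseq b by unfold_locales (auto simp: b0' bS')
  show ?thesis
  proof (intro exI[of _ "1/4"] conjI exI[of _ V])
    show "continuous_on {0..} V" using V_cont by (rule continuous_on_subset) auto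
    show "mono_on {0..} V" by (auto intro!: mono_onI V_mono)
    show "concave_on {0..} V" using V_concave unfolding concave_on_def
      by (rule convex_on_subset) auto
    show "\<forall>x\<ge>0. V x \<ge> 0" using V_nonneg by auto
    show "filterlim V at_top at_top"
      unfolding filterlim_at_top
    proof
      fix Z :: real
      obtain m :: nat where "Z \<le> m" using real_arch_simple by blast
      then show "\<forall>\<^sub>F x in at_top. Z \<le> V x"
        unfolding eventually_at_top_linorder using V_lower[of m]
        by (intro exI[of _ "b m"]) force
    qed
    have ev: "\<forall>\<^sub>F x in at_top. x \<ge> 0 \<and> f x \<ge> 1 \<and> g x \<ge> 1"
      using eventually_ge_at_top[of 0] f_lim[unfolded filterlim_at_top, rule_format, of 1]
        g_lim[unfolded filterlim_at_top, rule_format, of 1]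
      by (intro eventually_conj)
    show "\<forall>\<^sub>F x in at_top. 1/4 \<le> V (f x) / V (g x)"
      using ev
    proof (rule eventually_mono)
      fix x assume x: "x \<ge> 0 \<and> f x \<ge> 1 \<and> g x \<ge> 1"
      then obtain m where m: "b m \<le> f x" "f x < b (Suc m)" using bracket[of "f x"] b0 by auto
      have "g x \<le> \<psi> (b (Suc m))" using psi[of x "b (Suc m)"] x m by auto
      also have "\<dots> \<le> b (Suc (Suc m))" unfolding bS'[of "Suc m"] by (rule max.cobounded2)
      finally have gu: "V (g x) \<le> real (Suc (Suc m)) + 2" using x by (intro V_upper) auto
      have gl: "V (g x) \<ge> 1" using V_lower[of 0 "g x"] x b0 by auto
      have fl: "V (f x) \<ge> real m + 1" using V_lower m by auto
      have "1/4 \<le> (real m + 1) / (real m + 4)" by (simp add: field_simps)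
      also have "\<dots> \<le> V (f x) / V (g x)"
        using gu gl fl by (intro frac_le) auto
      finally show "1/4 \<le> V (f x) / V (g x)" .
    qed
  qed simp
qed

end
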